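(* Let $A\subset\mathbb{R}$ be a finite set. Then there exists a subset $A'\subseteq A$ with $|A'|\geq |A|/2$ such that for all $a\in A'$, $$|(A+A)(A+a)|\gg \frac{|A|^{5/3}}{(\log|A|)^{1/3}},$$ where $(A+A)(A+a)=\{(b+c)(d+a): b,c,d\in A\}$.
   Context: $X\gg Y$ means $X\geq cY$ for some absolute constant $c>0$ (independent of $A$ and $a$). Logarithms are to base 2. *)

theory Defs
  imports Complex_Main
begin

definition sumprod_set :: "real set \<Rightarrow> real \<Rightarrow> real set" where
  "sumprod_set A a = {(b + c) * (d + a) | b c d. b \<in> A \<and> c \<in> A \<and> d \<in> A}"

end

theory Submission
  imports Defs
begin


definition rk :: "real set \<Rightarrow> real \<Rightarrow> nat" where
  "rk A x = card {z\<in>A. z < x}"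

definition lp :: "real set \<Rightarrow> real \<times> real \<Rightarrow> (real \<times> real) set" where
  "lp A l = {p \<in> A \<times> A. snd p = fst l * fst p + snd l}"

definition inc :: "real set \<Rightarrow> real \<times> real \<Rightarrow> nat" where
  "inc A l = card (lp A l)"

lemma rk_less: assumes "finite A" "x \<in> A" "y \<in> A" "x < y" shows "rk A x < rk A y"
proof -
  have "{z\<in>A. z < x} \<subset> {z\<in>A. z < y}" using assms by auto
  then show ?thesis unfolding rk_def by (intro psubset_card_mono) (use assms in auto)
qed

lemma rk_le: assumes "finite A" "x \<in> A" shows "rk A x < card A"
proof -
  have "{z\<in>A. z < x} \<subset> A" using assms by auto
  then show ?thesis unfolding rk_def by (intro psubset_card_mono) (use assms in auto)
qed

lemma rk_inj: assumes "finite A" shows "inj_on (rk A) A"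
proof (rule inj_onI)
  fix x y assume "x \<in> A" "y \<in> A" "rk A x = rk A y"
  then show "x = y" using rk_less[OF assms] by (metis less_irrefl linorder_neqE_linordered_idom)
qed

lemma lp_finite: "finite A \<Longrightarrow> finite (lp A l)"
  unfolding lp_def by (rule finite_subset[of _ "A \<times> A"]) auto

lemma lp_sub: "lp A l \<subseteq> A \<times> A" unfolding lp_def by auto

lemma inc_le: assumes "finite A" shows "inc A l \<le> card A"
proof -
  have "lp A l \<subseteq> (\<lambda>x. (x, fst l * x + snd l)) ` A" unfolding lp_def by auto
  then have "inc A l \<le> card ((\<lambda>x. (x, fst l * x + snd l)) ` A)"
    unfolding inc_def by (intro card_mono) (use assms in auto)
  also have "\<dots> \<le> card A" by (rule card_image_le[OF assms])
  finally show ?thesis .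
qed

lemma two_points_line:
  assumes "p \<in> lp A l1" "q \<in> lp A l1" "p \<in> lp A l2" "q \<in> lp A l2" "p \<noteq> q"
  shows "l1 = l2"
proof -
  obtain a1 b1 where l1: "l1 = (a1, b1)" by fastforce
  obtain a2 b2 where l2: "l2 = (a2, b2)" by fastforce
  obtain x1 y1 where p: "p = (x1, y1)" by fastforce
  obtain x2 y2 where q: "q = (x2, y2)" by fastforce
  have e: "y1 = a1 * x1 + b1" "y2 = a1 * x2 + b1" "y1 = a2 * x1 + b2" "y2 = a2 * x2 + b2"
    using assms unfolding lp_def l1 l2 p q by auto
  have "x1 \<noteq> x2" using e assms(5) p q by auto
  then have "a1 = a2"
  proof -
    have "(a1 - a2) * (x1 - x2) = 0" using e by (simp add: algebra_simps)
    then show ?thesis using \<open>x1 \<noteq> x2\<close> by simp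
  qed
  then have "b1 = b2" using e by simp
  then show ?thesis using l1 l2 \<open>a1 = a2\<close> by simp
qed



definition cell :: "nat \<Rightarrow> real set \<Rightarrow> real \<times> real \<Rightarrow> nat \<times> nat" where
  "cell G A p = (rk A (fst p) div G, rk A (snd p) div G)"

lemma card_offdiag: assumes "finite S"
  shows "card {pq \<in> S \<times> S. fst pq \<noteq> snd pq} = card S * (card S - 1)"
proof -
  have e: "{pq \<in> S \<times> S. fst pq \<noteq> snd pq} = S \<times> S - (\<lambda>x. (x,x)) ` S" by auto
  have "card ((\<lambda>x. (x,x)) ` S) = card S" by (rule card_image) (auto simp: inj_on_def)
  then have "card {pq \<in> S \<times> S. fst pq \<noteq> snd pq} = card S * card S - card S"
    unfolding e using assms by (subst card_Diff_subset) (auto simp: card_cartesian_product)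
  then show ?thesis by (simp add: algebra_simps)
qed

lemma sum_pairs_lines:
  assumes "finite A" "finite L"
  shows "(\<Sum>l\<in>L. inc A l * (inc A l - 1)) \<le> card A ^ 4"
proof -
  have "(\<Sum>l\<in>L. inc A l * (inc A l - 1)) = (\<Sum>l\<in>L. card {pq \<in> lp A l \<times> lp A l. fst pq \<noteq> snd pq})"
    unfolding inc_def by (simp add: card_offdiag lp_finite assms)
  also have "\<dots> = card (SIGMA l:L. {pq \<in> lp A l \<times> lp A l. fst pq \<noteq> snd pq})"
    by (rule card_SigmaI[symmetric]) (use assms lp_finite in auto)
  also have "\<dots> \<le> card ((A \<times> A) \<times> (A \<times> A))"
  proof -
    have "inj_on snd (SIGMA l:L. {pq \<in> lp A l \<times> lp A l. fst pq \<noteq> snd pq})"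
    proof (rule inj_onI)
      fix x y assume x: "x \<in> (SIGMA l:L. {pq \<in> lp A l \<times> lp A l. fst pq \<noteq> snd pq})"
        and y: "y \<in> (SIGMA l:L. {pq \<in> lp A l \<times> lp A l. fst pq \<noteq> snd pq})" and e: "snd x = snd y"
      obtain l1 p q where x1: "x = (l1, (p, q))" by (metis prod.collapse)
      obtain l2 where y1: "y = (l2, (p, q))" using e x1 by (metis prod.collapse snd_conv)
      have "l1 = l2" by (rule two_points_line[of p A l1 q l2]) (use x y x1 y1 in auto)
      then show "x = y" using x1 y1 by simp
    qed
    moreover have "snd ` (SIGMA l:L. {pq \<in> lp A l \<times> lp A l. fst pq \<noteq> snd pq}) \<subseteq> (A \<times> A) \<times> (A \<times> A)"
      using lp_sub by fastforce
    ultimately show ?thesis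
      using card_inj_on_le[of snd _ "(A \<times> A) \<times> (A \<times> A)"] assms(1) by blast
  qed
  also have "\<dots> = card A ^ 4" by (simp add: card_cartesian_product power4_eq_xxxx)
  finally show ?thesis .
qed

lemma card_block: assumes "finite A" "G \<ge> 1"
  shows "card {x\<in>A. rk A x div G = b} \<le> G"
proof -
  have "card {x\<in>A. rk A x div G = b} = card (rk A ` {x\<in>A. rk A x div G = b})"
    by (rule card_image[symmetric]) (rule inj_on_subset[OF rk_inj[OF assms(1)]], auto)
  also have "\<dots> \<le> card {b*G..<b*G+G}"
  proof (rule card_mono)
    show "rk A ` {x \<in> A. rk A x div G = b} \<subseteq> {b * G..<b * G + G}"
    proof
      fix k assume "k \<in> rk A ` {x \<in> A. rk A x div G = b}"
      then have "k div G = b" by auto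
      moreover have "k div G * G + k mod G = k" by (rule div_mult_mod_eq)
      moreover have "k mod G < G" using assms(2) by simp
      ultimately have "b * G \<le> k" "k < b * G + G" by auto
      then show "k \<in> {b * G..<b * G + G}" by simp
    qed
  qed auto
  finally show ?thesis by simp
qed

lemma card_cellclass: assumes "finite A" "G \<ge> 1"
  shows "card {q \<in> A \<times> A. cell G A q = c} \<le> G * G"
proof -
  have "{q \<in> A \<times> A. cell G A q = c} = {x\<in>A. rk A x div G = fst c} \<times> {y\<in>A. rk A y div G = snd c}"
    unfolding cell_def by (cases c) auto
  then show ?thesis using card_block[OF assms]
    by (simp add: card_cartesian_product mult_le_mono)
qed

lemma card_samecell: assumes "finite A" "G \<ge> 1"
  shows "card {pq \<in> (A \<times> A) \<times> (A \<times> A). cell G A (fst pq) = cell G A (snd pq)} \<le> card A ^ 2 * G ^ 2"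
proof -
  have "{pq \<in> (A \<times> A) \<times> (A \<times> A). cell G A (fst pq) = cell G A (snd pq)}
      = (SIGMA p:A \<times> A. {q \<in> A \<times> A. cell G A q = cell G A p})" by auto
  then have "card {pq \<in> (A \<times> A) \<times> (A \<times> A). cell G A (fst pq) = cell G A (snd pq)}
     = (\<Sum>p\<in>A\<times>A. card {q \<in> A \<times> A. cell G A q = cell G A p})"
    using assms by (simp add: card_SigmaI)
  also have "\<dots> \<le> (\<Sum>p\<in>A\<times>A. G * G)" by (rule sum_mono) (rule card_cellclass[OF assms])
  also have "\<dots> = card A ^ 2 * G ^ 2" by (simp add: card_cartesian_product power2_eq_square)
  finally show ?thesis .
qed



definition sig :: "real \<Rightarrow> nat \<times> nat \<Rightarrow> int" where
  "sig s c = int (fst c) + (if s > 0 then int (snd c) else - int (snd c))"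

lemma cell_mono_aux:
  assumes A: "finite A" and l: "fst l \<noteq> 0" and p: "p \<in> lp A l" and q: "q \<in> lp A l"
    and lt: "fst p < fst q" and e: "sig (fst l) (cell G A p) = sig (fst l) (cell G A q)"
  shows "cell G A p = cell G A q"
proof -
  have pA: "fst p \<in> A" "snd p \<in> A" and qA: "fst q \<in> A" "snd q \<in> A"
    using p q unfolding lp_def by auto
  have ps: "snd p = fst l * fst p + snd l" and qs: "snd q = fst l * fst q + snd l"
    using p q unfolding lp_def by auto
  have x: "rk A (fst p) div G \<le> rk A (fst q) div G"
    using rk_less[OF A pA(1) qA(1) lt] by (intro div_le_mono) simp
  show ?thesis
  proof (cases "fst l > 0")
    case True
    then have "snd p < snd q" using ps qs lt by simp
    then have "rk A (snd p) div G \<le> rk A (snd q) div G"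
      using rk_less[OF A pA(2) qA(2)] by (intro div_le_mono) simp
    then show ?thesis using x e True unfolding sig_def cell_def by auto
  next
    case False
    then have "fst l < 0" using l by simp
    then have "snd q < snd p" using ps qs lt by (simp add: mult_strict_left_mono_neg)
    then have "rk A (snd q) div G \<le> rk A (snd p) div G"
      using rk_less[OF A qA(2) pA(2)] by (intro div_le_mono) simp
    then show ?thesis using x e False unfolding sig_def cell_def by auto
  qed
qed

lemma cell_img_card:
  assumes A: "finite A" and l: "fst l \<noteq> 0" and G: "G \<ge> 1"
  shows "card (cell G A ` lp A l) \<le> 3 * ((card A - 1) div G) + 1"
proof -
  define D where "D = (card A - 1) div G"
  have inj: "inj_on (sig (fst l)) (cell G A ` lp A l)"
  proof (rule inj_onI)
    fix c1 c2 assume c1: "c1 \<in> cell G A ` lp A l" and c2: "c2 \<in> cell G A ` lp A l"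
      and e: "sig (fst l) c1 = sig (fst l) c2"
    obtain p where p: "p \<in> lp A l" "c1 = cell G A p" using c1 by auto
    obtain q where q: "q \<in> lp A l" "c2 = cell G A q" using c2 by auto
    consider "fst p < fst q" | "fst p = fst q" | "fst q < fst p" by linarith
    then show "c1 = c2"
    proof cases
      case 1 then show ?thesis using cell_mono_aux[OF A l p(1) q(1)] e p q by auto
    next
      case 2
      then have "snd p = snd q" using p q unfolding lp_def by auto
      then have "p = q" using 2 by (simp add: prod_eq_iff)
      then show ?thesis using p q by simp
    next
      case 3
      have "cell G A q = cell G A p" by (rule cell_mono_aux[OF A l q(1) p(1) 3]) (use e p q in simp)
      then show ?thesis using p q by simp
    qed
  qed
  have rng: "sig (fst l) ` cell G A ` lp A l \<subseteq> {- int D .. 2 * int D}"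
  proof
    fix z assume "z \<in> sig (fst l) ` cell G A ` lp A l"
    then obtain p where p: "p \<in> lp A l" "z = sig (fst l) (cell G A p)" by auto
    have pA: "fst p \<in> A" "snd p \<in> A" using p unfolding lp_def by auto
    have "rk A (fst p) \<le> card A - 1" "rk A (snd p) \<le> card A - 1"
      using rk_le[OF A pA(1)] rk_le[OF A pA(2)] by auto
    then have "rk A (fst p) div G \<le> D" "rk A (snd p) div G \<le> D"
      unfolding D_def by (auto intro: div_le_mono)
    then show "z \<in> {- int D .. 2 * int D}" using p unfolding sig_def cell_def by auto
  qed
  have "card (cell G A ` lp A l) = card (sig (fst l) ` cell G A ` lp A l)"
    by (rule card_image[symmetric, OF inj])
  also have "\<dots> \<le> card {- int D .. 2 * int D}" by (rule card_mono[OF _ rng]) simp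
  also have "\<dots> = 3 * D + 1" by simp
  finally show ?thesis unfolding D_def .
qed



lemma line_pairs_lower:
  assumes A: "finite A" and l: "fst l \<noteq> 0" and G: "G \<ge> 1"
    and big: "2 * (3 * ((card A - 1) div G) + 1) \<le> inc A l"
  shows "inc A l \<le> 2 * card {pq \<in> lp A l \<times> lp A l. fst pq \<noteq> snd pq \<and> cell G A (fst pq) = cell G A (snd pq)}"
proof -
  define S where "S = lp A l"
  define sp where "sp = {pq \<in> S \<times> S. fst pq \<noteq> snd pq \<and> cell G A (fst pq) = cell G A (snd pq)}"
  have fS: "finite S" unfolding S_def using lp_finite[OF A] .
  have fsp: "finite sp" unfolding sp_def using fS by (auto intro: finite_subset[of _ "S \<times> S"])
  define good where "good = fst ` sp"
  have gsub: "good \<subseteq> S" unfolding good_def sp_def by auto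
  have inj: "inj_on (cell G A) (S - good)"
  proof (rule inj_onI)
    fix p q assume p: "p \<in> S - good" and q: "q \<in> S - good" and e: "cell G A p = cell G A q"
    show "p = q"
    proof (rule ccontr)
      assume "p \<noteq> q"
      then have "(p, q) \<in> sp" using p q e unfolding sp_def by auto
      then have "p \<in> good" unfolding good_def by force
      then show False using p by simp
    qed
  qed
  have "card (S - good) = card (cell G A ` (S - good))" by (rule card_image[symmetric, OF inj])
  also have "\<dots> \<le> card (cell G A ` S)" by (rule card_mono) (use fS in auto)
  also have "\<dots> \<le> 3 * ((card A - 1) div G) + 1" unfolding S_def by (rule cell_img_card[OF A l G])
  finally have lon: "card (S - good) \<le> 3 * ((card A - 1) div G) + 1" .
  have "card S = card good + card (S - good)"
    using card_Diff_subset[OF finite_subset[OF gsub fS] gsub] card_mono[OF fS gsub] by simp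
  moreover have "card good \<le> card sp" unfolding good_def by (rule card_image_le[OF fsp])
  ultimately have "card S \<le> card sp + (3 * ((card A - 1) div G) + 1)" using lon by simp
  then show ?thesis using big unfolding S_def sp_def inc_def by simp
qed

lemma L1_main:
  assumes A: "finite A" and L: "finite L" and T2: "T \<ge> 2" and Tn: "T \<le> card A"
  shows "(\<Sum>l\<in>{l\<in>L. inc A l \<ge> T}. inc A l) * T^2 \<le> 339 * card A ^ 4"
proof -
  define n where "n = card A"
  define G where "G = 12 * n div T + 1"
  define D where "D = (n - 1) div G"
  have G1: "G \<ge> 1" unfolding G_def by simp
  have GT: "G * T > 12 * n"
  proof -
    have "12 * n div T * T + 12 * n mod T = 12 * n" by (rule div_mult_mod_eq)
    moreover have "12 * n mod T < T" using T2 by simp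
    moreover have "(12 * n div T + 1) * T = 12 * n div T * T + T" by simp
    ultimately show ?thesis unfolding G_def by linarith
  qed
  have GT2: "G * T \<le> 13 * n"
  proof -
    have "12 * n div T * T \<le> 12 * n" by (rule div_times_less_eq_dividend)
    moreover have "(12 * n div T + 1) * T = 12 * n div T * T + T" by simp
    ultimately show ?thesis unfolding G_def using Tn n_def by linarith
  qed
  have DG: "D * G \<le> n - 1" unfolding D_def by (rule div_times_less_eq_dividend)
  have npos: "n \<ge> 1" using Tn T2 n_def by simp
  have "12 * D < T"
  proof -
    have "D * (G * T) \<le> (n - 1) * T" using mult_le_mono1[OF DG, of T] by (simp add: mult.assoc)
    also have "\<dots> < n * T" using npos T2 by simp
    finally have "D * (G * T) < n * T" .
    moreover have "D * (12 * n) \<le> D * (G * T)" using GT by simp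
    ultimately have "D * (12 * n) < n * T" by linarith
    then have "(12 * D) * n < T * n" by (simp add: ac_simps)
    then show ?thesis by (simp only: mult_less_cancel2)
  qed
  then have big: "2 * (3 * D + 1) \<le> T" using T2 by (cases "D = 0") auto
  define R0 where "R0 = {l\<in>L. inc A l \<ge> T \<and> fst l = 0}"
  define R1 where "R1 = {l\<in>L. inc A l \<ge> T \<and> fst l \<noteq> 0}"
  have split: "{l\<in>L. inc A l \<ge> T} = R0 \<union> R1" "R0 \<inter> R1 = {}"
    unfolding R0_def R1_def by auto
  have fR: "finite R0" "finite R1" using L unfolding R0_def R1_def by auto
  have s: "(\<Sum>l\<in>{l\<in>L. inc A l \<ge> T}. inc A l) = (\<Sum>l\<in>R0. inc A l) + (\<Sum>l\<in>R1. inc A l)"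
    unfolding split(1) by (rule sum.union_disjoint[OF fR split(2)])
  have R0card: "card R0 \<le> n"
  proof -
    have "inj_on snd R0" 
    proof (rule inj_onI)
      fix x y assume "x \<in> R0" "y \<in> R0" "snd x = snd y"
      then show "x = y" unfolding R0_def by (simp add: prod_eq_iff)
    qed
    moreover have "snd ` R0 \<subseteq> A"
    proof
      fix u assume "u \<in> snd ` R0"
      then obtain l where l: "l \<in> R0" "u = snd l" by auto
      then have "inc A l \<ge> 1" using T2 unfolding R0_def by auto
      then have "lp A l \<noteq> {}" unfolding inc_def by auto
      then obtain p where "p \<in> lp A l" by auto
      then show "u \<in> A" using l unfolding lp_def R0_def by auto
    qed
    ultimately show ?thesis unfolding n_def using card_inj_on_le[of snd R0 A] A by blast
  qed
  have s0: "(\<Sum>l\<in>R0. inc A l) \<le> n * n"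
  proof -
    have "(\<Sum>l\<in>R0. inc A l) \<le> (\<Sum>l\<in>R0. n)" by (rule sum_mono) (simp add: inc_le[OF A] n_def)
    also have "\<dots> \<le> n * n" using R0card by simp
    finally show ?thesis .
  qed
  define sp where "sp = (\<lambda>l. {pq \<in> lp A l \<times> lp A l. fst pq \<noteq> snd pq \<and> cell G A (fst pq) = cell G A (snd pq)})"
  have s1: "(\<Sum>l\<in>R1. inc A l) \<le> 2 * (n^2 * G^2)"
  proof -
    have "(\<Sum>l\<in>R1. inc A l) \<le> (\<Sum>l\<in>R1. 2 * card (sp l))"
    proof (rule sum_mono)
      fix l assume l: "l \<in> R1"
      show "inc A l \<le> 2 * card (sp l)" unfolding sp_def
        by (rule line_pairs_lower[OF A _ G1]) (use l big in \<open>auto simp: R1_def D_def n_def\<close>)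
    qed
    also have "\<dots> = 2 * card (SIGMA l:R1. sp l)"
      by (simp add: sum_distrib_left[symmetric] card_SigmaI fR sp_def lp_finite[OF A])
    also have "\<dots> \<le> 2 * (n^2 * G^2)"
    proof -
      have "inj_on snd (SIGMA l:R1. sp l)"
      proof (rule inj_onI)
        fix x y assume x: "x \<in> (SIGMA l:R1. sp l)" and y: "y \<in> (SIGMA l:R1. sp l)" and e: "snd x = snd y"
        obtain l1 p q where x1: "x = (l1, (p, q))" by (metis prod.collapse)
        obtain l2 where y1: "y = (l2, (p, q))" using e x1 by (metis prod.collapse snd_conv)
        have "l1 = l2" by (rule two_points_line[of p A l1 q l2]) (use x y x1 y1 in \<open>auto simp: sp_def\<close>)
        then show "x = y" using x1 y1 by simp
      qed
      moreover have "snd ` (SIGMA l:R1. sp l) \<subseteq> {pq \<in> (A \<times> A) \<times> (A \<times> A). cell G A (fst pq) = cell G A (snd pq)}"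
        unfolding sp_def using lp_sub by fastforce
      ultimately have "card (SIGMA l:R1. sp l) \<le> card {pq \<in> (A \<times> A) \<times> (A \<times> A). cell G A (fst pq) = cell G A (snd pq)}"
        using card_inj_on_le[of snd _ "{pq \<in> (A \<times> A) \<times> (A \<times> A). cell G A (fst pq) = cell G A (snd pq)}"] A by auto
      also have "\<dots> \<le> n^2 * G^2" unfolding n_def by (rule card_samecell[OF A G1])
      finally show ?thesis by simp
    qed
    finally show ?thesis .
  qed
  have "(\<Sum>l\<in>{l\<in>L. inc A l \<ge> T}. inc A l) * T^2 \<le> (n * n + 2 * (n^2 * G^2)) * T^2"
    using s s0 s1 by simp
  also have "\<dots> = n^2 * T^2 + 2 * n^2 * (G * T)^2" by (simp add: algebra_simps power2_eq_square)
  also have "\<dots> \<le> n^2 * n^2 + 2 * n^2 * (13 * n)^2"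
  proof -
    have "T^2 \<le> n^2" using Tn n_def by (simp add: power_mono)
    moreover have "(G * T)^2 \<le> (13 * n)^2" using GT2 by (simp only: power_mono)
    ultimately show ?thesis by (intro add_mono mult_le_mono2) (simp_all)
  qed
  also have "\<dots> = 339 * n^4" by (simp add: algebra_simps power2_eq_square power4_eq_xxxx)
  finally show ?thesis unfolding n_def .
qed

lemma L1:
  assumes A: "finite A" and L: "finite L" and T1: "T \<ge> 1"
  shows "real (\<Sum>l\<in>{l\<in>L. inc A l \<ge> T \<and> inc A l \<ge> 2}. inc A l) \<le> 339 * real (card A) ^ 4 / real T ^ 2"
proof -
  define T' where "T' = max T 2"
  have e: "{l\<in>L. inc A l \<ge> T \<and> inc A l \<ge> 2} = {l\<in>L. inc A l \<ge> T'}" unfolding T'_def by auto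
  show ?thesis
  proof (cases "T' \<le> card A")
    case True
    have "(\<Sum>l\<in>{l\<in>L. inc A l \<ge> T'}. inc A l) * T'^2 \<le> 339 * card A ^ 4"
      by (rule L1_main[OF A L _ True]) (simp add: T'_def)
    then have "real (\<Sum>l\<in>{l\<in>L. inc A l \<ge> T'}. inc A l) * real T'^2 \<le> 339 * real (card A) ^ 4"
      by (simp only: of_nat_le_iff[symmetric, where 'a=real] of_nat_mult of_nat_numeral of_nat_power)
    moreover have "real T^2 \<le> real T'^2" unfolding T'_def by (intro power_mono) auto
    moreover have "real T > 0" using T1 by simp
    ultimately have "real (\<Sum>l\<in>{l\<in>L. inc A l \<ge> T'}. inc A l) * real T^2 \<le> 339 * real (card A) ^ 4"
      using mult_left_mono[of "real T^2" "real T'^2" "real (\<Sum>l\<in>{l\<in>L. inc A l \<ge> T'}. inc A l)"]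
      by (meson of_nat_0_le_iff order_trans)
    then show ?thesis unfolding e using T1 by (simp add: field_simps)
  next
    case False
    then have "{l\<in>L. inc A l \<ge> T'} = {}" 
    proof -
      { fix l assume "l \<in> L" "inc A l \<ge> T'"
        then have False using inc_le[OF A, of l] False by linarith }
      then show ?thesis by blast
    qed
    then show ?thesis unfolding e by (simp only: sum.empty) simp
  qed
qed



lemma tele_sq: assumes "K \<ge> 1" "N \<ge> K"
  shows "(\<Sum>T\<in>{K+1..N}. 1 / real T ^ 2) \<le> 1 / real K - 1 / real N"
  using assms(2)
proof (induction N rule: dec_induct)
  case base then show ?case by simp
next
  case (step N)
  have e: "{K+1..Suc N} = insert (Suc N) {K+1..N}" using step by auto
  have "(\<Sum>T\<in>{K+1..Suc N}. 1 / real T ^ 2) = 1 / real (Suc N) ^ 2 + (\<Sum>T\<in>{K+1..N}. 1 / real T ^ 2)"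
    unfolding e by (subst sum.insert) auto
  also have "\<dots> \<le> 1 / real (Suc N) ^ 2 + (1 / real K - 1 / real N)" using step by simp
  also have "\<dots> \<le> 1 / real K - 1 / real (Suc N)"
  proof -
    have N1: "real N \<ge> 1" using step assms by simp
    have e1: "1 / real N - 1 / real (Suc N) = 1 / (real N * real (Suc N))"
      using N1 by (simp add: field_simps)
    have "real N * real (Suc N) \<le> real (Suc N) ^ 2" by (simp add: power2_eq_square)
    then have "1 / real (Suc N) ^ 2 \<le> 1 / (real N * real (Suc N))"
      using N1 by (intro divide_left_mono) auto
    then have "1 / real (Suc N) ^ 2 \<le> 1 / real N - 1 / real (Suc N)" using e1 by simp
    then show ?thesis by simp
  qed
  finally show ?case .
qed

lemma harm_bound: assumes "n \<ge> 1" shows "(\<Sum>T\<in>{1..n}. 1 / real T) \<le> 1 + ln (real n)"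
  using assms
proof (induction n rule: dec_induct)
  case base then show ?case by simp
next
  case (step N)
  have e: "{1..Suc N} = insert (Suc N) {1..N}" by auto
  have N1: "real N \<ge> 1" using step by simp
  have "ln (real N / real (Suc N)) \<le> real N / real (Suc N) - 1"
    by (rule ln_le_minus_one) (use N1 in simp)
  then have "ln (real N) - ln (real (Suc N)) \<le> - 1 / real (Suc N)"
    using N1 by (simp add: ln_div field_simps)
  then have "1 / real (Suc N) \<le> ln (real (Suc N)) - ln (real N)" by simp
  then show ?case unfolding e using step by (subst sum.insert) auto
qed

lemma layer:
  assumes "i \<le> n" "K \<le> i"
  shows "real i * real (i - K) = (\<Sum>T\<in>{K+1..n}. if T \<le> i then real i else 0)"
proof -
  have "(\<Sum>T\<in>{K+1..n}. if T \<le> i then real i else 0) = (\<Sum>T\<in>{T\<in>{K+1..n}. T \<le> i}. real i)"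
    by (rule sum.inter_filter[symmetric]) simp
  also have "{T\<in>{K+1..n}. T \<le> i} = {K+1..i}" using assms by auto
  finally show ?thesis by simp
qed

lemma layer2:
  assumes "i \<le> n"
  shows "real i ^ 2 \<le> (\<Sum>T\<in>{1..n}. if T \<le> i then 2 * real T else 0)"
proof -
  have "(\<Sum>T\<in>{1..n}. if T \<le> i then 2 * real T else 0) = (\<Sum>T\<in>{T\<in>{1..n}. T \<le> i}. 2 * real T)"
    by (rule sum.inter_filter[symmetric]) simp
  also have "{T\<in>{1..n}. T \<le> i} = {1..i}" using assms by auto
  also have "(\<Sum>T\<in>{1..i}. 2 * real T) = real i * (real i + 1)"
    by (induction i) (auto simp: algebra_simps)
  finally show ?thesis by (simp add: power2_eq_square algebra_simps)
qed

lemma L2: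
  assumes A: "finite A" and L: "finite L" and M: "M \<ge> 1"
  shows "(\<Sum>l\<in>{l\<in>L. real (inc A l) > M \<and> inc A l \<ge> 2}. real (inc A l) ^ 2) \<le> 678 * real (card A) ^ 4 / M"
proof -
  define n where "n = card A"
  define K where "K = nat \<lfloor>M\<rfloor> + 1"
  have K1: "real K > M" "real K \<le> M + 1" unfolding K_def using M
    by (simp_all add: of_nat_nat) linarith+
  then have K2: "K \<ge> 2" using M by linarith
  have Kpos: "real K > 0" using K2 by simp
  define R where "R = {l\<in>L. inc A l \<ge> K \<and> inc A l \<ge> 2}"
  have eR: "{l\<in>L. real (inc A l) > M \<and> inc A l \<ge> 2} = R"
  proof -
    { fix l have "real (inc A l) > M \<longleftrightarrow> inc A l \<ge> K"
      proof -
        have f0: "\<lfloor>M\<rfloor> \<ge> 0" using M by simp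
        have "real (inc A l) > M \<longleftrightarrow> \<lfloor>M\<rfloor> < int (inc A l)"
          by (metis floor_less_iff of_int_of_nat_eq)
        also have "\<dots> \<longleftrightarrow> nat \<lfloor>M\<rfloor> + 1 \<le> inc A l" using f0 by linarith
        finally show ?thesis by (simp add: K_def)
      qed }
    then show ?thesis unfolding R_def by auto
  qed
  have fR: "finite R" unfolding R_def using L by simp
  have in_n: "inc A l \<le> n" for l unfolding n_def by (rule inc_le[OF A])
  have "(\<Sum>l\<in>R. real (inc A l) ^ 2) = (\<Sum>l\<in>R. real K * real (inc A l) + real (inc A l) * real (inc A l - K))"
  proof (rule sum.cong)
    fix l assume "l \<in> R" then have "K \<le> inc A l" unfolding R_def by simp
    then show "real (inc A l) ^ 2 = real K * real (inc A l) + real (inc A l) * real (inc A l - K)"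
      by (simp add: of_nat_diff power2_eq_square algebra_simps)
  qed simp
  also have "\<dots> = real K * (\<Sum>l\<in>R. real (inc A l)) + (\<Sum>l\<in>R. \<Sum>T\<in>{K+1..n}. if T \<le> inc A l then real (inc A l) else 0)"
  proof -
    have "(\<Sum>l\<in>R. real (inc A l) * real (inc A l - K)) = (\<Sum>l\<in>R. \<Sum>T\<in>{K+1..n}. if T \<le> inc A l then real (inc A l) else 0)"
    proof (rule sum.cong)
      fix l assume "l \<in> R" then have "K \<le> inc A l" unfolding R_def by simp
      then show "real (inc A l) * real (inc A l - K) = (\<Sum>T\<in>{K+1..n}. if T \<le> inc A l then real (inc A l) else 0)"
        by (rule layer[OF in_n])
    qed simp
    then show ?thesis by (simp add: sum.distrib sum_distrib_left)
  qed
  also have "(\<Sum>l\<in>R. \<Sum>T\<in>{K+1..n}. if T \<le> inc A l then real (inc A l) else 0)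
      = (\<Sum>T\<in>{K+1..n}. \<Sum>l\<in>R. if T \<le> inc A l then real (inc A l) else 0)" by (rule sum.swap)
  also have "\<dots> = (\<Sum>T\<in>{K+1..n}. real (\<Sum>l\<in>{l\<in>L. inc A l \<ge> T \<and> inc A l \<ge> 2}. inc A l))"
  proof (rule sum.cong)
    fix T assume T: "T \<in> {K+1..n}"
    have "(\<Sum>l\<in>R. if T \<le> inc A l then real (inc A l) else 0) = (\<Sum>l\<in>{l\<in>R. T \<le> inc A l}. real (inc A l))"
      by (simp add: sum.inter_filter[OF fR])
    also have "{l\<in>R. T \<le> inc A l} = {l\<in>L. inc A l \<ge> T \<and> inc A l \<ge> 2}" using T unfolding R_def by auto
    finally show "(\<Sum>l\<in>R. if T \<le> inc A l then real (inc A l) else 0) = real (\<Sum>l\<in>{l\<in>L. inc A l \<ge> T \<and> inc A l \<ge> 2}. inc A l)"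
      by simp
  qed simp
  also have "\<dots> \<le> (\<Sum>T\<in>{K+1..n}. 339 * real n ^ 4 * (1 / real T ^ 2))"
    by (rule sum_mono) (use L1[OF A L] n_def in auto)
  also have "\<dots> = 339 * real n ^ 4 * (\<Sum>T\<in>{K+1..n}. 1 / real T ^ 2)" by (simp add: sum_distrib_left)
  also have "\<dots> \<le> 339 * real n ^ 4 * (1 / real K)"
  proof (cases "K \<le> n")
    case True
    have "(\<Sum>T\<in>{K+1..n}. 1 / real T ^ 2) \<le> 1 / real K - 1 / real n" using tele_sq[of K n] K2 True by simp
    also have "\<dots> \<le> 1 / real K" by simp
    finally show ?thesis by (intro mult_left_mono) auto
  next
    case False
    then show ?thesis by simp
  qed
  finally have s: "(\<Sum>l\<in>R. real (inc A l) ^ 2) \<le> real K * (\<Sum>l\<in>R. real (inc A l)) + 339 * real n ^ 4 * (1 / real K)"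
    by simp
  have "(\<Sum>l\<in>R. real (inc A l)) \<le> 339 * real n ^ 4 / real K ^ 2"
    using L1[OF A L, of K] K2 unfolding R_def n_def by simp
  then have "real K * (\<Sum>l\<in>R. real (inc A l)) \<le> 339 * real n ^ 4 / real K"
    using Kpos by (simp add: field_simps power2_eq_square)
  with s have "(\<Sum>l\<in>R. real (inc A l) ^ 2) \<le> 678 * real n ^ 4 / real K" by simp
  also have "\<dots> \<le> 678 * real n ^ 4 / M" using K1 M by (intro divide_left_mono) auto
  finally show ?thesis unfolding eR n_def .
qed

lemma L3:
  assumes A: "finite A" and L: "finite L"
  shows "(\<Sum>l\<in>{l\<in>L. inc A l \<ge> 2}. real (inc A l) ^ 3) \<le> 678 * real (card A) ^ 4 * (1 + ln (real (card A)))"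
proof -
  define n where "n = card A"
  define R where "R = {l\<in>L. inc A l \<ge> 2}"
  have fR: "finite R" unfolding R_def using L by simp
  have in_n: "inc A l \<le> n" for l unfolding n_def by (rule inc_le[OF A])
  have "(\<Sum>l\<in>R. real (inc A l) ^ 3) \<le> (\<Sum>l\<in>R. \<Sum>T\<in>{1..n}. if T \<le> inc A l then 2 * real T * real (inc A l) else 0)"
  proof (rule sum_mono)
    fix l
    have "real (inc A l) ^ 3 = real (inc A l) ^ 2 * real (inc A l)" by (simp add: power3_eq_cube power2_eq_square)
    also have "\<dots> \<le> (\<Sum>T\<in>{1..n}. if T \<le> inc A l then 2 * real T else 0) * real (inc A l)"
      by (rule mult_right_mono[OF layer2[OF in_n]]) simp
    also have "\<dots> = (\<Sum>T\<in>{1..n}. if T \<le> inc A l then 2 * real T * real (inc A l) else 0)"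
      by (subst sum_distrib_right) (auto intro: sum.cong)
    finally show "real (inc A l) ^ 3 \<le> \<dots>" .
  qed
  also have "\<dots> = (\<Sum>T\<in>{1..n}. \<Sum>l\<in>R. if T \<le> inc A l then 2 * real T * real (inc A l) else 0)" by (rule sum.swap)
  also have "\<dots> = (\<Sum>T\<in>{1..n}. 2 * real T * real (\<Sum>l\<in>{l\<in>L. inc A l \<ge> T \<and> inc A l \<ge> 2}. inc A l))"
  proof (rule sum.cong)
    fix T assume T: "T \<in> {1..n}"
    have "(\<Sum>l\<in>R. if T \<le> inc A l then 2 * real T * real (inc A l) else 0) = (\<Sum>l\<in>{l\<in>R. T \<le> inc A l}. 2 * real T * real (inc A l))"
      by (simp add: sum.inter_filter[OF fR])
    also have "{l\<in>R. T \<le> inc A l} = {l\<in>L. inc A l \<ge> T \<and> inc A l \<ge> 2}" unfolding R_def by auto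
    finally show "(\<Sum>l\<in>R. if T \<le> inc A l then 2 * real T * real (inc A l) else 0) = 2 * real T * real (\<Sum>l\<in>{l\<in>L. inc A l \<ge> T \<and> inc A l \<ge> 2}. inc A l)"
      by (simp add: sum_distrib_left)
  qed simp
  also have "\<dots> \<le> (\<Sum>T\<in>{1..n}. 2 * real T * (339 * real n ^ 4 / real T ^ 2))"
  proof (rule sum_mono)
    fix T assume T: "T \<in> {1..n}"
    have "real (\<Sum>l\<in>{l\<in>L. inc A l \<ge> T \<and> inc A l \<ge> 2}. inc A l) \<le> 339 * real n ^ 4 / real T ^ 2"
      using L1[OF A L, of T] T n_def by simp
    then show "2 * real T * real (\<Sum>l\<in>{l\<in>L. inc A l \<ge> T \<and> inc A l \<ge> 2}. inc A l) \<le> 2 * real T * (339 * real n ^ 4 / real T ^ 2)"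
      by (intro mult_left_mono) auto
  qed
  also have "\<dots> = 678 * real n ^ 4 * (\<Sum>T\<in>{1..n}. 1 / real T)"
    by (simp add: sum_distrib_left power2_eq_square)
  also have "\<dots> \<le> 678 * real n ^ 4 * (1 + ln (real n))"
  proof (cases "n \<ge> 1")
    case True then show ?thesis using harm_bound[of n] by (intro mult_left_mono) auto
  next
    case False then have "n = 0" by simp
    then show ?thesis by simp
  qed
  finally show ?thesis unfolding R_def n_def .
qed



lemma count_eq:
  assumes X: "finite X" and Y: "finite Y" and V: "finite V" and sub: "f ` X \<subseteq> V"
  shows "card {xy \<in> X \<times> Y. f (fst xy) = g (snd xy)} = (\<Sum>v\<in>V. card {x\<in>X. f x = v} * card {y\<in>Y. g y = v})"
proof -
  have e: "{xy \<in> X \<times> Y. f (fst xy) = g (snd xy)} = (\<Union>v\<in>V. {x\<in>X. f x = v} \<times> {y\<in>Y. g y = v})"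
    using sub by auto
  have "card (\<Union>v\<in>V. {x\<in>X. f x = v} \<times> {y\<in>Y. g y = v}) = (\<Sum>v\<in>V. card ({x\<in>X. f x = v} \<times> {y\<in>Y. g y = v}))"
    by (rule card_UN_disjoint) (use X Y V in auto)
  then show ?thesis unfolding e by (simp add: card_cartesian_product)
qed

lemma card_fibres:
  assumes X: "finite X" and V: "finite V" and sub: "f ` X \<subseteq> V"
  shows "card X = (\<Sum>v\<in>V. card {x\<in>X. f x = v})"
proof -
  have e: "X = (\<Union>v\<in>V. {x\<in>X. f x = v})" using sub by auto
  have "card (\<Union>v\<in>V. {x\<in>X. f x = v}) = (\<Sum>v\<in>V. card {x\<in>X. f x = v})"
    by (rule card_UN_disjoint) (use X V in auto)
  then show ?thesis using e by simp
qed

lemma CS_card: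
  fixes f :: "'a \<Rightarrow> real"
  assumes "finite S"
  shows "(\<Sum>x\<in>S. f x)^2 \<le> real (card S) * (\<Sum>x\<in>S. f x ^ 2)"
proof -
  have "0 \<le> (\<Sum>x\<in>S. \<Sum>y\<in>S. (f x - f y)^2)" by (intro sum_nonneg) auto
  also have "(\<Sum>x\<in>S. \<Sum>y\<in>S. (f x - f y)^2) = (\<Sum>x\<in>S. \<Sum>y\<in>S. f x ^ 2 + f y ^ 2 - 2 * (f x * f y))"
    by (simp add: power2_diff mult.assoc)
  also have "\<dots> = 2 * real (card S) * (\<Sum>x\<in>S. f x ^ 2) - 2 * (\<Sum>x\<in>S. f x)^2"
    by (simp add: sum.distrib sum_subtractf sum_distrib_left sum_distrib_right power2_eq_square
        algebra_simps)
  finally show ?thesis by simp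
qed

lemma count_le_half:
  assumes X: "finite X" and V: "finite V" and sub1: "f ` X \<subseteq> V" and sub2: "g ` X \<subseteq> V"
  shows "real (card {xy \<in> X \<times> X. f (fst xy) = g (snd xy)})
     \<le> (real (card {xy \<in> X \<times> X. f (fst xy) = f (snd xy)}) + real (card {xy \<in> X \<times> X. g (fst xy) = g (snd xy)})) / 2"
proof -
  define cf where "cf v = real (card {x\<in>X. f x = v})" for v
  define cg where "cg v = real (card {x\<in>X. g x = v})" for v
  have "real (card {xy \<in> X \<times> X. f (fst xy) = g (snd xy)}) = (\<Sum>v\<in>V. cf v * cg v)"
    unfolding cf_def cg_def using count_eq[OF X X V sub1, of g] by simp
  also have "\<dots> \<le> (\<Sum>v\<in>V. (cf v ^ 2 + cg v ^ 2) / 2)"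
  proof (rule sum_mono)
    fix v have "0 \<le> (cf v - cg v)^2" by simp
    then show "cf v * cg v \<le> (cf v ^ 2 + cg v ^ 2) / 2" by (simp add: power2_diff)
  qed
  also have "\<dots> = ((\<Sum>v\<in>V. cf v * cf v) + (\<Sum>v\<in>V. cg v * cg v)) / 2"
    by (simp add: sum.distrib sum_divide_distrib[symmetric] power2_eq_square add_divide_distrib)
  also have "(\<Sum>v\<in>V. cf v * cf v) = real (card {xy \<in> X \<times> X. f (fst xy) = f (snd xy)})"
    unfolding cf_def using count_eq[OF X X V sub1, of f] by simp
  also have "(\<Sum>v\<in>V. cg v * cg v) = real (card {xy \<in> X \<times> X. g (fst xy) = g (snd xy)})"
    unfolding cg_def using count_eq[OF X X V sub2, of g] by simp
  finally show ?thesis .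
qed



definition Fp :: "real \<Rightarrow> real \<times> real \<times> real \<Rightarrow> real" where
  "Fp a x = (fst x + fst (snd x)) * (snd (snd x) + a)"
definition Qs :: "real set \<Rightarrow> real \<Rightarrow> ((real \<times> real \<times> real) \<times> (real \<times> real \<times> real)) set" where
  "Qs A a = {xy \<in> (A \<times> A \<times> A) \<times> (A \<times> A \<times> A). Fp a (fst xy) = Fp a (snd xy)}"
definition Rs :: "real set \<Rightarrow> real \<Rightarrow> ((real \<times> real) \<times> (real \<times> real)) set" where
  "Rs A l = {pq \<in> (A \<times> A) \<times> (A \<times> A). snd (fst pq) + snd (snd pq) = l * (fst (fst pq) + fst (snd pq))}"
definition Ks :: "real set \<Rightarrow> real \<Rightarrow> real \<Rightarrow> (real \<times> real) set" where
  "Ks A l a = {p \<in> A \<times> A. snd p + a = l * (fst p + a) \<and> fst p + a \<noteq> 0}"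
definition Lam :: "real set \<Rightarrow> real set" where
  "Lam A = (\<lambda>x. (snd (snd x) + fst x) / (fst (snd x) + fst x)) ` (A \<times> A \<times> A)"
definition gg :: "real \<Rightarrow> real \<times> real \<Rightarrow> real" where
  "gg l p = snd p - l * fst p"
definition U :: "real set \<Rightarrow> real \<Rightarrow> real set" where
  "U A l = gg l ` (A \<times> A)"

lemma fin_Lam: "finite A \<Longrightarrow> finite (Lam A)" unfolding Lam_def by simp
lemma fin_U: "finite A \<Longrightarrow> finite (U A l)" unfolding U_def by simp
lemma fin_Rs: "finite A \<Longrightarrow> finite (Rs A l)" unfolding Rs_def by simp
lemma fin_Ks: "finite A \<Longrightarrow> finite (Ks A l a)" unfolding Ks_def by simp

lemma Qnz_le:
  assumes A: "finite A" and a: "a \<in> A"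
  shows "card {xy \<in> Qs A a. Fp a (fst xy) \<noteq> 0} \<le> (\<Sum>l\<in>Lam A. card (Rs A l) * card (Ks A l a))"
proof -
  define phi where "phi = (\<lambda>xy :: (real \<times> real \<times> real) \<times> (real \<times> real \<times> real).
     case xy of ((b,c,d),(b',c',d')) \<Rightarrow> ((d'+a)/(d+a), (((b',b),(c',c)), (d,d'))))"
  have inj: "inj_on phi {xy \<in> Qs A a. Fp a (fst xy) \<noteq> 0}"
    by (rule inj_onI) (auto simp: phi_def split: prod.splits)
  have sub: "phi ` {xy \<in> Qs A a. Fp a (fst xy) \<noteq> 0} \<subseteq> (SIGMA l:Lam A. Rs A l \<times> Ks A l a)"
  proof
    fix z assume "z \<in> phi ` {xy \<in> Qs A a. Fp a (fst xy) \<noteq> 0}"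
    then obtain b c d b' c' d' where z: "z = phi ((b,c,d),(b',c',d'))"
      and m: "((b,c,d),(b',c',d')) \<in> Qs A a" and nz: "Fp a (b,c,d) \<noteq> 0"
      by (auto simp: prod_eq_iff)
    have mem: "b \<in> A" "c \<in> A" "d \<in> A" "b' \<in> A" "c' \<in> A" "d' \<in> A" using m unfolding Qs_def by auto
    have eq: "(b + c) * (d + a) = (b' + c') * (d' + a)" using m unfolding Qs_def Fp_def by simp
    have nz2: "(b + c) * (d + a) \<noteq> 0" using nz unfolding Fp_def by simp
    then have da: "d + a \<noteq> 0" by auto
    define l where "l = (d' + a) / (d + a)"
    have l1: "d' + a = l * (d + a)" unfolding l_def using da by simp
    have l2: "b + c = l * (b' + c')"
    proof -
      have "(b + c) * (d + a) = (b' + c') * (l * (d + a))" using eq l1 by simp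
      then have "(b + c) * (d + a) = (l * (b' + c')) * (d + a)" by (simp add: ac_simps)
      then show ?thesis using da by simp
    qed
    have lL: "l \<in> Lam A" unfolding Lam_def l_def using mem a
      by (intro image_eqI[of _ _ "(a, d, d')"]) (auto simp: add.commute)
    show "z \<in> (SIGMA l:Lam A. Rs A l \<times> Ks A l a)"
      using z lL l1 l2 da mem unfolding phi_def Rs_def Ks_def l_def[symmetric] by auto
  qed
  have "card {xy \<in> Qs A a. Fp a (fst xy) \<noteq> 0} \<le> card (SIGMA l:Lam A. Rs A l \<times> Ks A l a)"
    using card_inj_on_le[OF inj sub] A by (simp add: fin_Lam fin_Rs fin_Ks finite_SigmaI)
  also have "\<dots> = (\<Sum>l\<in>Lam A. card (Rs A l) * card (Ks A l a))"
    using A by (simp add: fin_Lam fin_Rs fin_Ks card_cartesian_product)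
  finally show ?thesis .
qed



lemma Z_card:
  assumes A: "finite A"
  shows "card {x \<in> A \<times> A \<times> A. Fp a x = 0} \<le> 2 * card A ^ 2"
proof -
  have sub: "{x \<in> A \<times> A \<times> A. Fp a x = 0} \<subseteq> (\<lambda>p. (fst p, - fst p, snd p)) ` (A \<times> A) \<union> (\<lambda>p. (fst p, snd p, - a)) ` (A \<times> A)"
  proof
    fix x assume x: "x \<in> {x \<in> A \<times> A \<times> A. Fp a x = 0}"
    obtain b c d where xe: "x = (b, c, d)" by (metis prod.collapse)
    have m: "b \<in> A" "c \<in> A" "d \<in> A" and z: "(b + c) * (d + a) = 0" using x xe unfolding Fp_def by auto
    then have "c = - b \<or> d = - a" by (auto simp: add_eq_0_iff)
    then show "x \<in> (\<lambda>p. (fst p, - fst p, snd p)) ` (A \<times> A) \<union> (\<lambda>p. (fst p, snd p, - a)) ` (A \<times> A)"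
    proof
      assume "c = - b" then show ?thesis using xe m by (auto intro!: image_eqI[of _ _ "(b, d)"])
    next
      assume "d = - a" then show ?thesis using xe m by (auto intro!: image_eqI[of _ _ "(b, c)"])
    qed
  qed
  have "card {x \<in> A \<times> A \<times> A. Fp a x = 0} \<le> card ((\<lambda>p. (fst p, - fst p, snd p)) ` (A \<times> A) \<union> (\<lambda>p. (fst p, snd p, - a)) ` (A \<times> A))"
    by (rule card_mono[OF _ sub]) (use A in simp)
  also have "\<dots> \<le> card ((\<lambda>p. (fst p, - fst p, snd p)) ` (A \<times> A)) + card ((\<lambda>p. (fst p, snd p, - a)) ` (A \<times> A))"
    by (rule card_Un_le)
  also have "\<dots> \<le> card (A \<times> A) + card (A \<times> A)"
    by (intro add_mono card_image_le) (use A in auto)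
  finally show ?thesis by (simp add: card_cartesian_product power2_eq_square)
qed

lemma Q_le:
  assumes A: "finite A" and a: "a \<in> A"
  shows "real (card (Qs A a)) \<le> 4 * real (card A) ^ 4 + (\<Sum>l\<in>Lam A. real (card (Rs A l)) * real (card (Ks A l a)))"
proof -
  define Z where "Z = {x \<in> A \<times> A \<times> A. Fp a x = 0}"
  have sub: "Qs A a \<subseteq> Z \<times> Z \<union> {xy \<in> Qs A a. Fp a (fst xy) \<noteq> 0}"
    unfolding Qs_def Z_def by auto
  have "card (Qs A a) \<le> card (Z \<times> Z \<union> {xy \<in> Qs A a. Fp a (fst xy) \<noteq> 0})"
    by (rule card_mono[OF _ sub]) (use A in \<open>simp add: Z_def Qs_def\<close>)
  also have "\<dots> \<le> card (Z \<times> Z) + card {xy \<in> Qs A a. Fp a (fst xy) \<noteq> 0}" by (rule card_Un_le)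
  also have "\<dots> \<le> (2 * card A ^ 2) * (2 * card A ^ 2) + (\<Sum>l\<in>Lam A. card (Rs A l) * card (Ks A l a))"
  proof (rule add_mono)
    show "card (Z \<times> Z) \<le> (2 * card A ^ 2) * (2 * card A ^ 2)"
      using mult_le_mono[OF Z_card[OF A, of a] Z_card[OF A, of a]] unfolding Z_def card_cartesian_product .
  qed (rule Qnz_le[OF A a])
  finally have "real (card (Qs A a)) \<le> real ((2 * card A ^ 2) * (2 * card A ^ 2) + (\<Sum>l\<in>Lam A. card (Rs A l) * card (Ks A l a)))"
    by (simp only: of_nat_le_iff)
  then show ?thesis by (simp add: power2_eq_square power4_eq_xxxx)
qed

lemma lp_gg: "{p \<in> A \<times> A. gg l p = u} = lp A (l, u)"
  unfolding lp_def gg_def by auto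

lemma E_eq:
  assumes A: "finite A"
  shows "card {pq \<in> (A \<times> A) \<times> (A \<times> A). gg l (fst pq) = gg l (snd pq)} = (\<Sum>u\<in>U A l. inc A (l, u) ^ 2)"
  using count_eq[OF _ _ fin_U[OF A], of "A \<times> A" "A \<times> A" "gg l" l "gg l"] A
  by (simp add: U_def lp_gg inc_def power2_eq_square)

lemma sum_inc:
  assumes A: "finite A"
  shows "(\<Sum>u\<in>U A l. inc A (l, u)) = card A ^ 2"
  using card_fibres[OF _ fin_U[OF A], of "A \<times> A" "gg l" l] A
  by (simp add: U_def lp_gg inc_def card_cartesian_product power2_eq_square)

lemma Rs_le:
  assumes A: "finite A"
  shows "real (card (Rs A l)) \<le> (\<Sum>u\<in>U A l. real (inc A (l, u)) ^ 2)"
proof -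
  define P where "P = A \<times> A"
  have fP: "finite P" using A unfolding P_def by simp
  define V where "V = gg l ` P \<union> (\<lambda>p. - gg l p) ` P"
  have fV: "finite V" using fP unfolding V_def by simp
  have e: "Rs A l = {xy \<in> P \<times> P. gg l (fst xy) = (\<lambda>p. - gg l p) (snd xy)}"
    unfolding Rs_def P_def gg_def by (auto simp: algebra_simps)
  have e2: "{xy \<in> P \<times> P. - gg l (fst xy) = - gg l (snd xy)} = {xy \<in> P \<times> P. gg l (fst xy) = gg l (snd xy)}"
    by auto
  have "real (card (Rs A l)) \<le> (real (card {xy \<in> P \<times> P. gg l (fst xy) = gg l (snd xy)}) + real (card {xy \<in> P \<times> P. - gg l (fst xy) = - gg l (snd xy)})) / 2"
    unfolding e by (rule count_le_half[OF fP fV]) (auto simp: V_def)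
  also have "\<dots> = real (card {xy \<in> P \<times> P. gg l (fst xy) = gg l (snd xy)})" unfolding e2 by simp
  also have "\<dots> = (\<Sum>u\<in>U A l. real (inc A (l, u)) ^ 2)" unfolding P_def using E_eq[OF A, of l] by simp
  finally show ?thesis .
qed

lemma Ks_sub: "Ks A l a \<subseteq> lp A (l, (l - 1) * a)"
  unfolding Ks_def lp_def by (auto simp: algebra_simps)

lemma Ks_le: "finite A \<Longrightarrow> card (Ks A l a) \<le> inc A (l, (l - 1) * a)"
  unfolding inc_def by (rule card_mono[OF lp_finite Ks_sub])

lemma sum_t:
  assumes A: "finite A"
  shows "(\<Sum>l\<in>Lam A. \<Sum>a\<in>A. card (Ks A l a)) \<le> card A ^ 3"
proof -
  have "(\<Sum>l\<in>Lam A. \<Sum>a\<in>A. card (Ks A l a)) = card (SIGMA l:Lam A. SIGMA a:A. Ks A l a)"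
    using A by (simp add: fin_Lam fin_Ks card_SigmaI)
  also have "\<dots> \<le> card (A \<times> A \<times> A)"
  proof -
    define h where "h = (\<lambda>z :: real \<times> real \<times> real \<times> real. (fst (snd z), fst (snd (snd z)), snd (snd (snd z))))"
    have "inj_on h (SIGMA l:Lam A. SIGMA a:A. Ks A l a)"
    proof (rule inj_onI)
      fix x y assume x: "x \<in> (SIGMA l:Lam A. SIGMA a:A. Ks A l a)" and y: "y \<in> (SIGMA l:Lam A. SIGMA a:A. Ks A l a)"
        and e: "h x = h y"
      obtain l a d d' where xe: "x = (l, a, d, d')" by (metis prod.collapse)
      obtain l' where ye: "y = (l', a, d, d')" using e xe unfolding h_def by (metis prod.collapse fst_conv snd_conv)
      have "d' + a = l * (d + a)" "d' + a = l' * (d + a)" "d + a \<noteq> 0" using x y xe ye unfolding Ks_def by auto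
      then have "l = l'" by auto
      then show "x = y" using xe ye by simp
    qed
    moreover have "h ` (SIGMA l:Lam A. SIGMA a:A. Ks A l a) \<subseteq> A \<times> A \<times> A"
      unfolding h_def Ks_def by auto
    ultimately show ?thesis using card_inj_on_le A by blast
  qed
  finally show ?thesis by (simp add: card_cartesian_product power3_eq_cube)
qed

lemma sum_P2:
  assumes A: "finite A"
  shows "(\<Sum>l\<in>Lam A. \<Sum>u\<in>U A l. inc A (l, u) * (inc A (l, u) - 1)) \<le> card A ^ 4"
proof -
  have "(\<Sum>l\<in>Lam A. \<Sum>u\<in>U A l. inc A (l, u) * (inc A (l, u) - 1)) = (\<Sum>z\<in>(SIGMA l:Lam A. U A l). inc A z * (inc A z - 1))"
    using A by (simp add: sum.Sigma fin_Lam fin_U)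
  also have "\<dots> \<le> card A ^ 4" by (rule sum_pairs_lines[OF A]) (use A in \<open>simp add: fin_Lam fin_U\<close>)
  finally show ?thesis .
qed



lemma amgm: fixes b x y :: real assumes "b > 0" shows "x * y \<le> (b * x^2 + y^2 / b) / 2"
proof -
  have "0 \<le> (b * x - y)^2" by simp
  then have "2 * b * (x * y) \<le> b^2 * x^2 + y^2" by (simp add: power2_diff power_mult_distrib algebra_simps)
  then show ?thesis using assms by (simp add: field_simps power2_eq_square)
qed

lemma W_bound:
  assumes A: "finite A"
  shows "(\<Sum>l\<in>Lam A. \<Sum>u\<in>U A l. real (inc A (l,u)) * (real (inc A (l,u)) - 1)^2)
     \<le> 678 * real (card A) ^ 4 * (1 + ln (real (card A)))"
proof -
  define S where "S = (SIGMA l:Lam A. U A l)"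
  have fS: "finite S" unfolding S_def using A by (simp add: fin_Lam fin_U)
  have "(\<Sum>l\<in>Lam A. \<Sum>u\<in>U A l. real (inc A (l,u)) * (real (inc A (l,u)) - 1)^2)
      = (\<Sum>z\<in>S. real (inc A z) * (real (inc A z) - 1)^2)"
    unfolding S_def using A by (simp add: sum.Sigma fin_Lam fin_U)
  also have "\<dots> = (\<Sum>z\<in>{z\<in>S. inc A z \<ge> 2}. real (inc A z) * (real (inc A z) - 1)^2)"
  proof -
    have "(\<Sum>z\<in>{z\<in>S. inc A z \<ge> 2}. real (inc A z) * (real (inc A z) - 1)^2)
        = (\<Sum>z\<in>S. if inc A z \<ge> 2 then real (inc A z) * (real (inc A z) - 1)^2 else 0)"
      by (rule sum.inter_filter[OF fS])
    also have "\<dots> = (\<Sum>z\<in>S. real (inc A z) * (real (inc A z) - 1)^2)"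
    proof (rule sum.cong)
      fix z show "(if inc A z \<ge> 2 then real (inc A z) * (real (inc A z) - 1)^2 else 0) = real (inc A z) * (real (inc A z) - 1)^2"
      proof (cases "inc A z \<ge> 2")
        case False then have "inc A z = 0 \<or> inc A z = 1" by auto
        then show ?thesis by auto
      qed simp
    qed simp
    finally show ?thesis by simp
  qed
  also have "\<dots> \<le> (\<Sum>z\<in>{z\<in>S. inc A z \<ge> 2}. real (inc A z) ^ 3)"
  proof (rule sum_mono)
    fix z assume "z \<in> {z\<in>S. inc A z \<ge> 2}"
    then have i1: "real (inc A z) \<ge> 1" by simp
    then have "(real (inc A z) - 1)^2 \<le> real (inc A z) ^ 2" by (intro power_mono) auto
    then have "real (inc A z) * (real (inc A z) - 1)^2 \<le> real (inc A z) * real (inc A z) ^ 2"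
      using i1 by (intro mult_left_mono) auto
    then show "real (inc A z) * (real (inc A z) - 1)^2 \<le> real (inc A z) ^ 3" by (simp add: power3_eq_cube power2_eq_square)
  qed
  also have "\<dots> \<le> 678 * real (card A) ^ 4 * (1 + ln (real (card A)))" by (rule L3[OF A fS])
  finally show ?thesis .
qed

lemma T_bound:
  assumes A: "finite A" and M1: "M \<ge> 1" and Mn: "M \<le> real (card A)"
  shows "(\<Sum>l\<in>Lam A. \<Sum>a\<in>{a\<in>A. real (card (Ks A l a)) > M}. real (card (Ks A l a)) ^ 2)
     \<le> 679 * real (card A) ^ 4 / M"
proof -
  define n where "n = card A"
  define kk where "kk l a = real (card (Ks A l a))" for l a
  define B where "B l = {a\<in>A. kk l a > M}" for l
  have fL: "finite (Lam A)" using A by (simp add: fin_Lam)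
  have kkn: "kk l a \<le> real n" for l a
    unfolding kk_def n_def using Ks_le[OF A, of l a] inc_le[OF A, of "(l, (l-1)*a)"] by simp
  have kkinc: "kk l a \<le> real (inc A (l, (l-1)*a))" for l a unfolding kk_def using Ks_le[OF A] by simp
  have split: "(\<Sum>l\<in>Lam A. \<Sum>a\<in>B l. kk l a ^ 2) \<le> (\<Sum>l\<in>Lam A - {1}. \<Sum>a\<in>B l. kk l a ^ 2) + (\<Sum>l\<in>Lam A \<inter> {1}. \<Sum>a\<in>B l. kk l a ^ 2)"
  proof -
    have "Lam A = (Lam A - {1}) \<union> (Lam A \<inter> {1})" by auto
    then have "(\<Sum>l\<in>Lam A. \<Sum>a\<in>B l. kk l a ^ 2) = (\<Sum>l\<in>(Lam A - {1}) \<union> (Lam A \<inter> {1}). \<Sum>a\<in>B l. kk l a ^ 2)" by simp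
    also have "\<dots> = (\<Sum>l\<in>Lam A - {1}. \<Sum>a\<in>B l. kk l a ^ 2) + (\<Sum>l\<in>Lam A \<inter> {1}. \<Sum>a\<in>B l. kk l a ^ 2)"
      by (rule sum.union_disjoint) (use fL in auto)
    finally show ?thesis by simp
  qed
  have one: "(\<Sum>l\<in>Lam A \<inter> {1}. \<Sum>a\<in>B l. kk l a ^ 2) \<le> real n ^ 3"
  proof -
    have "(\<Sum>l\<in>Lam A \<inter> {1}. \<Sum>a\<in>B l. kk l a ^ 2) \<le> (\<Sum>l\<in>{1::real}. \<Sum>a\<in>B l. kk l a ^ 2)"
      by (rule sum_mono2) (auto intro: sum_nonneg)
    also have "\<dots> = (\<Sum>a\<in>B 1. kk 1 a ^ 2)" by simp
    also have "\<dots> \<le> (\<Sum>a\<in>A. kk 1 a ^ 2)" by (rule sum_mono2) (use A in \<open>auto simp: B_def\<close>)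
    also have "\<dots> \<le> (\<Sum>a\<in>A. real n ^ 2)" by (rule sum_mono) (use kkn in \<open>auto intro: power_mono simp: kk_def\<close>)
    also have "\<dots> = real n ^ 3" by (simp add: n_def power3_eq_cube power2_eq_square)
    finally show ?thesis .
  qed
  define h where "h z = (fst z, (fst z - 1) * snd z)" for z :: "real \<times> real"
  define Sig where "Sig = (SIGMA l:Lam A - {1}. B l)"
  have fSig: "finite Sig" unfolding Sig_def B_def using fL A by auto
  have injh: "inj_on h Sig"
  proof (rule inj_onI)
    fix x y assume x: "x \<in> Sig" and y: "y \<in> Sig" and e: "h x = h y"
    then have "fst x = fst y" "fst x \<noteq> 1" unfolding h_def Sig_def by auto
    moreover then have "snd x = snd y" using e unfolding h_def by auto
    ultimately show "x = y" by (simp add: prod_eq_iff)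
  qed
  have notone: "(\<Sum>l\<in>Lam A - {1}. \<Sum>a\<in>B l. kk l a ^ 2) \<le> 678 * real n ^ 4 / M"
  proof -
    have "(\<Sum>l\<in>Lam A - {1}. \<Sum>a\<in>B l. kk l a ^ 2) = (\<Sum>z\<in>Sig. kk (fst z) (snd z) ^ 2)"
      unfolding Sig_def using fL A by (subst sum.Sigma) (auto simp: B_def split_beta)
    also have "\<dots> \<le> (\<Sum>z\<in>Sig. real (inc A (h z)) ^ 2)"
      by (rule sum_mono) (use kkinc in \<open>auto simp: h_def kk_def intro: power_mono\<close>)
    also have "\<dots> = (\<Sum>w\<in>h ` Sig. real (inc A w) ^ 2)" using sum.reindex[OF injh, of "\<lambda>w. real (inc A w) ^ 2"] by simp
    also have "\<dots> \<le> (\<Sum>w\<in>{w\<in>h ` Sig. real (inc A w) > M \<and> inc A w \<ge> 2}. real (inc A w) ^ 2)"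
    proof -
      have "h ` Sig \<subseteq> {w\<in>h ` Sig. real (inc A w) > M \<and> inc A w \<ge> 2}"
      proof
        fix w assume "w \<in> h ` Sig"
        then obtain z where z: "z \<in> Sig" "w = h z" by auto
        then have "kk (fst z) (snd z) > M" unfolding Sig_def B_def by auto
        then have "real (inc A w) > M" using kkinc[of "fst z" "snd z"] z unfolding h_def by simp
        moreover then have "inc A w \<ge> 2" using M1 by linarith
        ultimately show "w \<in> {w\<in>h ` Sig. real (inc A w) > M \<and> inc A w \<ge> 2}" using z by auto
      qed
      then have "{w\<in>h ` Sig. real (inc A w) > M \<and> inc A w \<ge> 2} = h ` Sig" by blast
      then show ?thesis by simp
    qed
    also have "\<dots> \<le> 678 * real n ^ 4 / M" unfolding n_def by (rule L2[OF A _ M1]) (use fSig in simp)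
    finally show ?thesis .
  qed
  have "n^3 \<le> real n ^ 4 / M"
  proof -
    have "real n ^ 3 * M \<le> real n ^ 3 * real n" using Mn n_def by (intro mult_left_mono) auto
    moreover have "real n ^ 3 * real n = real n ^ 4" by (simp add: power_Suc power3_eq_cube power4_eq_xxxx)
    ultimately have "real n ^ 3 * M \<le> real n ^ 4" by simp
    then show ?thesis using M1 by (simp add: field_simps)
  qed
  then show ?thesis using split one notone unfolding B_def kk_def n_def by (simp add: add_divide_distrib[symmetric]) 
qed



lemma real_pair: "real (i * (i - 1)) = real i * (real i - 1)"
  by (cases i) (auto simp: algebra_simps)

lemma pow5: "(x::real) * x ^ 4 = x ^ 5"
proof -
  have "x ^ 5 = x ^ Suc 4" by simp
  also have "\<dots> = x * x ^ 4" by (rule power_Suc)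
  finally show ?thesis by simp
qed

lemma main_sum:
  assumes A: "finite A" and M1: "M \<ge> 1" and Mn: "M \<le> real (card A)"
    and M3: "M ^ 3 = real (card A) * (1 + ln (real (card A)))"
  shows "(\<Sum>a\<in>A. real (card (Qs A a))) \<le> 685 * real (card A) ^ 5 * M"
proof -
  define n where "n = card A"
  have npos: "real n > 0" using M1 Mn n_def by simp
  define kk where "kk l a = real (card (Ks A l a))" for l a
  define t where "t l = (\<Sum>a\<in>A. kk l a)" for l
  define B where "B l = {a\<in>A. kk l a > M}" for l
  define Tb where "Tb l = (\<Sum>a\<in>B l. kk l a)" for l
  define ic where "ic l u = real (inc A (l, u))" for l u
  define E where "E l = (\<Sum>u\<in>U A l. ic l u ^ 2)" for l
  define P2 where "P2 l = (\<Sum>u\<in>U A l. ic l u * (ic l u - 1))" for l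
  define W where "W l = (\<Sum>u\<in>U A l. ic l u * (ic l u - 1) ^ 2)" for l
  define Rr where "Rr l = real (card (Rs A l))" for l
  define \<beta> where "\<beta> = real n ^ 2 / M ^ 2"
  have bpos: "\<beta> > 0" unfolding \<beta>_def using npos M1 by simp
  have fL: "finite (Lam A)" using A by (simp add: fin_Lam)
  have t0: "t l \<ge> 0" for l unfolding t_def kk_def by (simp add: sum_nonneg)
  have sic: "(\<Sum>u\<in>U A l. ic l u) = real n ^ 2" for l
  proof -
    have "real (\<Sum>u\<in>U A l. inc A (l, u)) = real (card A ^ 2)" using sum_inc[OF A, of l] by (simp only:)
    then show ?thesis unfolding ic_def n_def by simp
  qed
  have s1: "(\<Sum>a\<in>A. real (card (Qs A a))) \<le> 4 * real n ^ 5 + (\<Sum>l\<in>Lam A. Rr l * t l)"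
  proof -
    have "(\<Sum>a\<in>A. real (card (Qs A a))) \<le> (\<Sum>a\<in>A. 4 * real n ^ 4 + (\<Sum>l\<in>Lam A. Rr l * kk l a))"
      by (rule sum_mono) (use Q_le[OF A] in \<open>simp add: n_def Rr_def kk_def\<close>)
    also have "\<dots> = 4 * real n ^ 5 + (\<Sum>a\<in>A. \<Sum>l\<in>Lam A. Rr l * kk l a)"
      by (simp add: sum.distrib n_def eval_nat_numeral algebra_simps)
    also have "(\<Sum>a\<in>A. \<Sum>l\<in>Lam A. Rr l * kk l a) = (\<Sum>l\<in>Lam A. Rr l * t l)"
      by (subst sum.swap) (simp add: t_def sum_distrib_left)
    finally show ?thesis .
  qed
  have s2: "(\<Sum>l\<in>Lam A. Rr l * t l) \<le> (\<Sum>l\<in>Lam A. E l * t l)"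
    by (rule sum_mono, rule mult_right_mono) (use Rs_le[OF A] t0 in \<open>auto simp: Rr_def E_def ic_def\<close>)
  have s3: "E l * t l \<le> real n ^ 2 * t l + real n * M * P2 l + (\<beta> * W l + real n ^ 2 * Tb l ^ 2 / \<beta>) / 2" for l
  proof -
    have EP: "E l = real n ^ 2 + P2 l"
    proof -
      have "E l = (\<Sum>u\<in>U A l. ic l u + ic l u * (ic l u - 1))"
        unfolding E_def by (rule sum.cong) (simp_all add: power2_eq_square algebra_simps)
      also have "\<dots> = (\<Sum>u\<in>U A l. ic l u) + P2 l" unfolding P2_def by (rule sum.distrib)
      finally show ?thesis using sic[of l] by simp
    qed
    have P20: "P2 l \<ge> 0" unfolding P2_def ic_def
    proof (intro sum_nonneg)
      fix u
      have "0 \<le> real (inc A (l, u) * (inc A (l, u) - 1))" by (rule of_nat_0_le_iff)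
      then show "0 \<le> real (inc A (l, u)) * (real (inc A (l, u)) - 1)" by (simp only: real_pair)
    qed
    have tle: "t l \<le> real n * M + Tb l"
    proof -
      have "t l = Tb l + (\<Sum>a\<in>A - B l. kk l a)"
        unfolding t_def Tb_def using A by (subst sum.subset_diff[of "B l"]) (auto simp: B_def)
      also have "(\<Sum>a\<in>A - B l. kk l a) \<le> (\<Sum>a\<in>A. M)"
      proof -
        have "(\<Sum>a\<in>A - B l. kk l a) \<le> (\<Sum>a\<in>A - B l. M)" by (rule sum_mono) (auto simp: B_def)
        also have "\<dots> \<le> (\<Sum>a\<in>A. M)" by (rule sum_mono2) (use A M1 in auto)
        finally show ?thesis .
      qed
      finally show ?thesis by (simp add: n_def algebra_simps)
    qed
    have PT: "P2 l * Tb l \<le> (\<beta> * W l + real n ^ 2 * Tb l ^ 2 / \<beta>) / 2"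
    proof -
      have "P2 l * Tb l = (\<Sum>u\<in>U A l. ic l u * ((ic l u - 1) * Tb l))"
        unfolding P2_def by (subst sum_distrib_right) (simp add: algebra_simps)
      also have "\<dots> \<le> (\<Sum>u\<in>U A l. ic l u * ((\<beta> * (ic l u - 1)^2 + Tb l ^ 2 / \<beta>) / 2))"
        by (rule sum_mono, rule mult_left_mono) (use amgm[OF bpos] in \<open>auto simp: ic_def\<close>)
      also have "\<dots> = (\<beta> * W l + (\<Sum>u\<in>U A l. ic l u) * Tb l ^ 2 / \<beta>) / 2"
        unfolding W_def by (simp add: sum_distrib_right sum_distrib_left sum_divide_distrib[symmetric]
            sum.distrib algebra_simps add_divide_distrib)
      finally show ?thesis using sic[of l] by simp
    qed
    have "E l * t l = real n ^ 2 * t l + P2 l * t l" using EP by (simp add: algebra_simps)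
    also have "P2 l * t l \<le> P2 l * (real n * M + Tb l)" by (rule mult_left_mono[OF tle P20])
    also have "\<dots> = real n * M * P2 l + P2 l * Tb l" by (simp add: algebra_simps)
    finally show ?thesis using PT by linarith
  qed
  have s4a: "(\<Sum>l\<in>Lam A. t l) \<le> real n ^ 3"
  proof -
    have "real (\<Sum>l\<in>Lam A. \<Sum>a\<in>A. card (Ks A l a)) \<le> real (card A ^ 3)"
      using sum_t[OF A] by (simp only: of_nat_le_iff)
    then show ?thesis unfolding t_def kk_def n_def by simp
  qed
  have s4b: "(\<Sum>l\<in>Lam A. P2 l) \<le> real n ^ 4"
  proof -
    have "(\<Sum>l\<in>Lam A. P2 l) = real (\<Sum>l\<in>Lam A. \<Sum>u\<in>U A l. inc A (l, u) * (inc A (l, u) - 1))"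
      unfolding P2_def ic_def by (simp only: of_nat_sum real_pair)
    also have "\<dots> \<le> real n ^ 4" 
    proof -
      have "real (\<Sum>l\<in>Lam A. \<Sum>u\<in>U A l. inc A (l, u) * (inc A (l, u) - 1)) \<le> real (card A ^ 4)"
        using sum_P2[OF A] by (simp only: of_nat_le_iff)
      then show ?thesis unfolding n_def by simp
    qed
    finally show ?thesis .
  qed
  have s4c: "(\<Sum>l\<in>Lam A. W l) \<le> 678 * real n ^ 4 * (1 + ln (real n))"
    using W_bound[OF A] unfolding W_def ic_def n_def .
  have s4d: "(\<Sum>l\<in>Lam A. Tb l ^ 2) \<le> real n * (679 * real n ^ 4 / M)"
  proof -
    have "(\<Sum>l\<in>Lam A. Tb l ^ 2) \<le> (\<Sum>l\<in>Lam A. real n * (\<Sum>a\<in>B l. kk l a ^ 2))"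
    proof (rule sum_mono)
      fix l
      have fB: "finite (B l)" using A unfolding B_def by simp
      have "Tb l ^ 2 \<le> real (card (B l)) * (\<Sum>a\<in>B l. kk l a ^ 2)" unfolding Tb_def by (rule CS_card[OF fB])
      also have "\<dots> \<le> real n * (\<Sum>a\<in>B l. kk l a ^ 2)"
        by (rule mult_right_mono) (use A in \<open>auto simp: n_def B_def intro!: card_mono sum_nonneg\<close>)
      finally show "Tb l ^ 2 \<le> real n * (\<Sum>a\<in>B l. kk l a ^ 2)" .
    qed
    also have "\<dots> = real n * (\<Sum>l\<in>Lam A. \<Sum>a\<in>B l. kk l a ^ 2)" by (simp add: sum_distrib_left)
    also have "\<dots> \<le> real n * (679 * real n ^ 4 / M)"
      by (rule mult_left_mono) (use T_bound[OF A M1 Mn] in \<open>auto simp: B_def kk_def n_def\<close>)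
    finally show ?thesis .
  qed
  have "(\<Sum>l\<in>Lam A. E l * t l) \<le> (\<Sum>l\<in>Lam A. real n ^ 2 * t l + real n * M * P2 l + (\<beta> * W l + real n ^ 2 * Tb l ^ 2 / \<beta>) / 2)"
    by (rule sum_mono[OF s3])
  also have "\<dots> = real n ^ 2 * (\<Sum>l\<in>Lam A. t l) + real n * M * (\<Sum>l\<in>Lam A. P2 l)
      + (\<beta> * (\<Sum>l\<in>Lam A. W l) + real n ^ 2 * (\<Sum>l\<in>Lam A. Tb l ^ 2) / \<beta>) / 2"
    by (simp add: sum.distrib sum_distrib_left sum_divide_distrib[symmetric] add_divide_distrib)
  also have "\<dots> \<le> real n ^ 2 * real n ^ 3 + real n * M * real n ^ 4
      + (\<beta> * (678 * real n ^ 4 * (1 + ln (real n))) + real n ^ 2 * (real n * (679 * real n ^ 4 / M)) / \<beta>) / 2"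
  proof -
    have i1: "real n ^ 2 * (\<Sum>l\<in>Lam A. t l) \<le> real n ^ 2 * real n ^ 3"
      by (rule mult_left_mono[OF s4a]) simp
    have i2: "real n * M * (\<Sum>l\<in>Lam A. P2 l) \<le> real n * M * real n ^ 4"
      by (rule mult_left_mono[OF s4b]) (use M1 in simp)
    have i3: "\<beta> * (\<Sum>l\<in>Lam A. W l) \<le> \<beta> * (678 * real n ^ 4 * (1 + ln (real n)))"
      by (rule mult_left_mono[OF s4c]) (use bpos in simp)
    have i4: "real n ^ 2 * (\<Sum>l\<in>Lam A. Tb l ^ 2) / \<beta> \<le> real n ^ 2 * (real n * (679 * real n ^ 4 / M)) / \<beta>"
      by (rule divide_right_mono[OF mult_left_mono[OF s4d]]) (use bpos in simp_all)
    have i5: "(\<beta> * (\<Sum>l\<in>Lam A. W l) + real n ^ 2 * (\<Sum>l\<in>Lam A. Tb l ^ 2) / \<beta>) / 2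
       \<le> (\<beta> * (678 * real n ^ 4 * (1 + ln (real n))) + real n ^ 2 * (real n * (679 * real n ^ 4 / M)) / \<beta>) / 2"
      by (rule divide_right_mono[OF add_mono[OF i3 i4]]) simp
    show ?thesis using add_mono[OF add_mono[OF i1 i2] i5] .
  qed
  also have "\<dots> = real n ^ 5 + M * real n ^ 5 + (678 * real n ^ 5 * M + 679 * real n ^ 5 * M) / 2"
  proof -
    have a: "\<beta> * (678 * real n ^ 4 * (1 + ln (real n))) = 678 * real n ^ 5 * M"
    proof -
      have "\<beta> * (678 * real n ^ 4 * (1 + ln (real n))) = 678 * real n ^ 5 * (real n * (1 + ln (real n))) / M ^ 2"
        unfolding \<beta>_def using M1 by (simp add: field_simps eval_nat_numeral)
      also have "\<dots> = 678 * real n ^ 5 * M ^ 3 / M ^ 2" using M3 n_def by simp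
      also have "\<dots> = 678 * real n ^ 5 * M" using M1 by (simp add: power2_eq_square power3_eq_cube)
      finally show ?thesis .
    qed
    have b: "real n ^ 2 * (real n * (679 * real n ^ 4 / M)) / \<beta> = 679 * real n ^ 5 * M"
      unfolding \<beta>_def using npos M1 by (simp add: field_simps) (simp add: eval_nat_numeral)
    show ?thesis unfolding a b by (simp add: pow5 algebra_simps)
  qed
  finally have s5: "(\<Sum>l\<in>Lam A. E l * t l) \<le> real n ^ 5 + M * real n ^ 5 + (678 * real n ^ 5 * M + 679 * real n ^ 5 * M) / 2" .
  have n5M: "real n ^ 5 \<le> real n ^ 5 * M" using M1 npos by simp
  have e5: "real n ^ 5 + M * real n ^ 5 + (678 * real n ^ 5 * M + 679 * real n ^ 5 * M) / 2 = real n ^ 5 + 1359 / 2 * (real n ^ 5 * M)"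
    by (simp add: algebra_simps)
  have e6: "685 * real n ^ 5 * M = 685 * (real n ^ 5 * M)" by simp
  have "(\<Sum>a\<in>A. real (card (Qs A a))) \<le> 685 * real n ^ 5 * M" unfolding e6
    using s1 s2 s5 n5M e5 zero_le_power[of "real n" 5] by linarith
  then show ?thesis unfolding n_def .
qed



lemma sumprod_eq: "sumprod_set A a = Fp a ` (A \<times> A \<times> A)"
  unfolding sumprod_set_def Fp_def by force

lemma G1:
  assumes A: "finite A"
  shows "real (card A) ^ 6 \<le> real (card (sumprod_set A a)) * real (card (Qs A a))"
proof -
  define X where "X = A \<times> A \<times> A"
  define S where "S = Fp a ` X"
  have fX: "finite X" using A unfolding X_def by simp
  have fS: "finite S" using fX unfolding S_def by simp
  define c where "c s = real (card {x\<in>X. Fp a x = s})" for s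
  have "card X = (\<Sum>s\<in>S. card {x\<in>X. Fp a x = s})" by (rule card_fibres[OF fX fS]) (simp add: S_def)
  then have "real (card X) = (\<Sum>s\<in>S. c s)" unfolding c_def by (simp only: of_nat_sum)
  moreover have "card X = card A ^ 3" unfolding X_def by (simp add: card_cartesian_product power3_eq_cube)
  ultimately have h1: "real (card A) ^ 3 = (\<Sum>s\<in>S. c s)" by simp
  have "card (Qs A a) = (\<Sum>s\<in>S. card {x\<in>X. Fp a x = s} * card {x\<in>X. Fp a x = s})"
    unfolding Qs_def X_def[symmetric] by (rule count_eq[OF fX fX fS]) (simp add: S_def)
  then have h2: "real (card (Qs A a)) = (\<Sum>s\<in>S. c s ^ 2)" unfolding c_def by (simp add: power2_eq_square)
  have "(\<Sum>s\<in>S. c s) ^ 2 \<le> real (card S) * (\<Sum>s\<in>S. c s ^ 2)" by (rule CS_card[OF fS])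
  then have "(real (card A) ^ 3) ^ 2 \<le> real (card S) * real (card (Qs A a))" unfolding h1 h2 .
  then show ?thesis unfolding S_def X_def sumprod_eq[symmetric] by (simp add: power_mult[symmetric])
qed

lemma final_ineq:
  fixes N M L :: real
  assumes N2: "N \<ge> 2" and Ld: "L = 1 + ln N" and Md: "M = (N * L) powr (1/3)"
  shows "N ^ 2 / (1370 * M) \<ge> (1/2740) * N powr (5/3) / (log 2 N) powr (1/3)"
proof -
  have lnN: "ln N \<ge> 0" using N2 by simp
  have ln2: "ln (2::real) > 0" "ln (2::real) \<le> 1" using ln_le_minus_one[of "2::real"] by auto
  have lg1: "log 2 N \<ge> 1" using N2 by simp
  have lnlog: "ln N \<le> log 2 N" unfolding log_def using lnN ln2
    by (simp add: le_divide_eq mult_left_le)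
  have L1: "L \<ge> 1" using Ld lnN by simp
  have L2: "L \<le> 2 * log 2 N" using Ld lnlog lg1 by simp
  have Npos: "N > 0" using N2 by simp
  have M: "M = N powr (1/3) * L powr (1/3)" unfolding Md using Npos L1 by (simp add: powr_mult)
  have N2e: "N ^ 2 = N powr (5/3) * N powr (1/3)"
  proof -
    have "N powr (5/3) * N powr (1/3) = N powr (5/3 + 1/3)" by (rule powr_add[symmetric])
    also have "\<dots> = N powr 2" by simp
    also have "\<dots> = N ^ 2" using Npos by (intro powr_numeral) simp
    finally show ?thesis by simp
  qed
  have p1: "N powr (1/3) > 0" "L powr (1/3) > 0" using Npos L1 by auto
  have eqN: "N ^ 2 / (1370 * M) = N powr (5/3) / (1370 * L powr (1/3))"
    unfolding M N2e using p1 by (simp add: field_simps)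
  have Lle: "L powr (1/3) \<le> 2 * (log 2 N) powr (1/3)"
  proof -
    have "L powr (1/3) \<le> (2 * log 2 N) powr (1/3)" using L1 L2 by (intro powr_mono2) auto
    also have "\<dots> = 2 powr (1/3) * (log 2 N) powr (1/3)" using lg1 by (simp add: powr_mult)
    also have "\<dots> \<le> 2 * (log 2 N) powr (1/3)"
    proof -
      have "(2::real) powr (1/3) \<le> 2 powr 1" by (intro powr_mono) auto
      then show ?thesis using lg1 by (intro mult_right_mono) auto
    qed
    finally show ?thesis .
  qed
  have lg0: "log 2 N \<noteq> 0" using lg1 by linarith
  have pp: "N powr (5/3) > 0" "(log 2 N) powr (1/3) > 0" using Npos lg0 by auto
  have "N powr (5/3) / (1370 * (2 * (log 2 N) powr (1/3))) \<le> N ^ 2 / (1370 * M)"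
  proof -
    have "N powr (5/3) / (1370 * (2 * (log 2 N) powr (1/3))) \<le> N powr (5/3) / (1370 * L powr (1/3))"
      by (rule divide_left_mono) (use Lle p1 pp in auto)
    then show ?thesis using eqN by simp
  qed
  moreover have "N powr (5/3) / (1370 * (2 * (log 2 N) powr (1/3))) = (1/2740) * N powr (5/3) / (log 2 N) powr (1/3)"
    by simp
  ultimately show ?thesis by simp
qed



theorem theorem2p10:
  shows "\<exists>C::real. C > 0 \<and>
    (\<forall>A :: real set. finite A \<longrightarrow>
       (\<exists>A' \<subseteq> A. real (card A') \<ge> real (card A) / 2 \<and>
          (\<forall>a \<in> A'. real (card (sumprod_set A a)) \<ge>
              C * real (card A) powr (5/3) / (log 2 (real (card A))) powr (1/3))))"
proof (intro exI[of _ "1/2740"] conjI allI impI)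
  show "(0::real) < 1/2740" by simp
  fix A :: "real set" assume A: "finite A"
  define n where "n = card A"
  define N where "N = real n"
  show "\<exists>A' \<subseteq> A. real (card A') \<ge> real (card A) / 2 \<and>
          (\<forall>a \<in> A'. real (card (sumprod_set A a)) \<ge>
              1/2740 * real (card A) powr (5/3) / (log 2 (real (card A))) powr (1/3))"
  proof (cases "n \<le> 1")
    case True
    show ?thesis
    proof (intro exI[of _ A] conjI ballI)
      show "A \<subseteq> A" by simp
      show "real (card A) \<ge> real (card A) / 2" by simp
      fix a assume aA: "a \<in> A"
      have "card A \<noteq> 0" using A aA by auto
      then have "n = 1" using True n_def by simp
      then show "real (card (sumprod_set A a)) \<ge> 1/2740 * real (card A) powr (5/3) / (log 2 (real (card A))) powr (1/3)"
        unfolding n_def by simp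
    qed
  next
    case False
    then have N2: "N \<ge> 2" unfolding N_def by simp
    have Npos: "N > 0" using N2 by simp
    define L where "L = 1 + ln N"
    define M where "M = (N * L) powr (1/3)"
    have lnN: "ln N \<ge> 0" using N2 by simp
    have L1: "L \<ge> 1" unfolding L_def using lnN by simp
    have NL1: "N * L \<ge> 1" using mult_mono[of 1 N 1 L] N2 L1 by simp
    have M1: "M \<ge> 1" unfolding M_def using NL1 by (intro ge_one_powr_ge_zero) auto
    have M3: "M ^ 3 = N * L"
    proof -
      have "M ^ 3 = M powr (real 3)" using M1 by (subst powr_realpow) auto
      also have "\<dots> = (N * L) powr (1/3 * real 3)" unfolding M_def by (rule powr_powr)
      also have "\<dots> = N * L" using NL1 by simp
      finally show ?thesis .
    qed
    have MN: "M \<le> N"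
    proof -
      have "L \<le> N" unfolding L_def using ln_le_minus_one[OF Npos] by simp
      also have "N \<le> N ^ 2" using N2 by (simp add: power2_eq_square)
      finally have "N * L \<le> N * N ^ 2" using Npos by simp
      then have "M ^ Suc 2 \<le> N ^ Suc 2" using M3 by (simp add: power2_eq_square power3_eq_cube)
      then show ?thesis by (rule power_le_imp_le_base) (use Npos in simp)
    qed
    have sumQ: "(\<Sum>a\<in>A. real (card (Qs A a))) \<le> 685 * N ^ 5 * M"
      using main_sum[OF A M1] MN M3 unfolding N_def n_def L_def by simp
    define B where "B = 1370 * N ^ 4 * M"
    have Bpos: "B > 0" unfolding B_def using Npos M1 by simp
    define A' where "A' = {a\<in>A. real (card (Qs A a)) \<le> B}"
    have A'sub: "A' \<subseteq> A" unfolding A'_def by auto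
    have cardA': "real (card A') \<ge> real (card A) / 2"
    proof (rule ccontr)
      assume "\<not> ?thesis"
      then have lt: "real (card A') < N / 2" unfolding N_def n_def by simp
      have cd: "card (A - A') = n - card A'" unfolding n_def using A A'sub by (simp add: card_Diff_subset finite_subset)
      have cle: "card A' \<le> n" unfolding n_def using A A'sub by (simp add: card_mono)
      have big: "real (card (A - A')) > N / 2" using lt cd cle unfolding N_def by (simp add: of_nat_diff)
      have "real (card (A - A')) * B \<le> (\<Sum>a\<in>A - A'. real (card (Qs A a)))"
      proof -
        have "(\<Sum>a\<in>A - A'. B) \<le> (\<Sum>a\<in>A - A'. real (card (Qs A a)))"
          by (rule sum_mono) (auto simp: A'_def)
        then show ?thesis by simp
      qed
      also have "\<dots> \<le> (\<Sum>a\<in>A. real (card (Qs A a)))" by (rule sum_mono2) (use A in auto)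
      also have "\<dots> \<le> 685 * N ^ 5 * M" by (rule sumQ)
      also have "\<dots> = N / 2 * B" unfolding B_def by (simp add: pow5[symmetric] algebra_simps)
      finally have "real (card (A - A')) * B \<le> N / 2 * B" .
      then have "real (card (A - A')) \<le> N / 2" using Bpos by simp
      then show False using big by simp
    qed
    show ?thesis
    proof (intro exI[of _ A'] conjI ballI)
      show "A' \<subseteq> A" by (rule A'sub)
      show "real (card A') \<ge> real (card A) / 2" by (rule cardA')
      fix a assume a: "a \<in> A'"
      define S where "S = real (card (sumprod_set A a))"
      define Q where "Q = real (card (Qs A a))"
      have QB: "Q \<le> B" using a unfolding A'_def Q_def by simp
      have g1: "N ^ 6 \<le> S * Q" using G1[OF A, of a] unfolding S_def Q_def N_def n_def .
      have Qpos: "Q > 0"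
      proof (rule ccontr)
        assume "\<not> Q > 0" then have "Q = 0" unfolding Q_def by simp
        then show False using g1 Npos by simp
      qed
      have "N ^ 6 / B \<le> N ^ 6 / Q" using QB Qpos by (intro divide_left_mono) auto
      also have "\<dots> \<le> S" using g1 Qpos by (simp add: divide_le_eq)
      finally have h: "N ^ 6 / B \<le> S" .
      have "N ^ 6 / B = N ^ 2 / (1370 * M)" unfolding B_def using Npos M1 by (simp add: field_simps)
      then have "N ^ 2 / (1370 * M) \<le> S" using h by simp
      moreover have "N ^ 2 / (1370 * M) \<ge> (1/2740) * N powr (5/3) / (log 2 N) powr (1/3)"
        by (rule final_ineq[OF N2 L_def M_def])
      ultimately show "real (card (sumprod_set A a)) \<ge> 1/2740 * real (card A) powr (5/3) / (log 2 (real (card A))) powr (1/3)"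
        unfolding S_def N_def n_def by simp
    qed
  qed
qed

end
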